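(* Let $k\ge 4$ be an integer, let $t$ be a positive integer divisible by $\operatorname{lcm}(2,3,\ldots,2k-1)$, and let $n$ be an integer with $k^2-k \le n \le 4k^2-10k+5$. Suppose $S$ is a $k$-bounded zero-sum sequence of length $|S| = t+n$ that is $t$-avoiding. Then there exist integers $\alpha>0$ and $\beta>0$ such that $v_\alpha(S) \ge \frac{k}{k+1}n$ and $v_{-\beta}(S) \ge \frac{k}{k+1}n$.
   Context: A sequence is a finite multiset of integers; $|S|$ is its length counted with multiplicity, $v_a(S)$ is the multiplicity of the integer $a$ in $S$, and a subsequence $T$ of $S$ is a sub-multiset. $S$ is zero-sum if the sum of its terms is $0$, and $k$-bounded if all terms lie in $[-k,k]$. A zero-sum sequence $S$ is $t$-avoiding if it has no zero-sum subsequence of length exactly $t$. *)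

theory Defs
  imports Complex_Main "HOL-Library.Multiset"
begin

definition zero_sum :: "int multiset \<Rightarrow> bool" where
  "zero_sum S \<longleftrightarrow> sum_mset S = 0"

definition bounded_seq :: "nat \<Rightarrow> int multiset \<Rightarrow> bool" where
  "bounded_seq k S \<longleftrightarrow> (\<forall>a \<in># S. - int k \<le> a \<and> a \<le> int k)"

definition avoiding :: "nat \<Rightarrow> int multiset \<Rightarrow> bool" where
  "avoiding t S \<longleftrightarrow> zero_sum S \<and>
     \<not> (\<exists>T. T \<subseteq># S \<and> size T = t \<and> zero_sum T)"

end

theory Submission imports Defs begin
lemma poly_ineq:
  fixes k n :: nat
  assumes "k \<ge> 4" "n + 10*k \<le> 4*k^2 + 5"
  shows "k*(k+3)*n \<le> 2*(k+1)*((2*k-1)*(2*k-3)*(2*k-5))"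
proof -
  obtain u where u: "k = u + 4" using assms(1) by (metis add.commute le_Suc_ex)
  have a0: "k*(k+3)*(n + 10*k) \<le> k*(k+3)*(4*k^2+5)" using assms(2) by simp
  have a: "k*(k+3)*n + k*(k+3)*(10*k) \<le> k*(k+3)*(4*k^2+5)"
    using a0 by (simp only: add_mult_distrib2)
  have b: "k*(k+3)*(4*k^2+5) \<le> 2*(k+1)*((2*k-1)*(2*k-3)*(2*k-5)) + k*(k+3)*(10*k)"
  proof -
    have e1: "2*k-1 = 2*u+7" "2*k-3 = 2*u+5" "2*k-5 = 2*u+3" using u by auto
    show ?thesis unfolding e1 unfolding u by (simp add: algebra_simps power2_eq_square)
  qed
  from a b show ?thesis by linarith
qed

lemma sum_count:
  fixes g :: "int \<Rightarrow> real"
  assumes "finite A" "set_mset M \<subseteq> A"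
  shows "(\<Sum>x\<in>#M. g x) = (\<Sum>a\<in>A. real (count M a) * g a)"
  using assms(2)
proof (induction M)
  case empty thus ?case by simp
next
  case (add x M)
  hence xA: "x \<in> A" and MA: "set_mset M \<subseteq> A" by auto
  have "(\<Sum>a\<in>A. real (count (add_mset x M) a) * g a) =
        (\<Sum>a\<in>A. real (count M a) * g a + (if a = x then g a else 0))"
    by (rule sum.cong) (auto simp: algebra_simps)
  also have "\<dots> = (\<Sum>a\<in>A. real (count M a) * g a) + g x"
    using xA assms(1) by (simp add: sum.distrib)
  finally show ?case using add.IH[OF MA] by simp
qed

lemma lcm_bound:
  fixes k :: nat assumes "k \<ge> 4"
  shows "(2*k-1)*(2*k-3)*(2*k-5)*k \<le> Lcm {2..2*k-1}"
proof -
  define L where "L = Lcm {2..2*k-1}"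
  have d: "x \<in> {2..2*k-1} \<Longrightarrow> x dvd L" for x unfolding L_def by (rule dvd_Lcm)
  obtain j where j: "k \<le> 2^j" "2^j \<le> 2*k-1"
  proof -
    define j where "j = (LEAST j. k \<le> (2::nat)^j)"
    have ex: "k \<le> (2::nat)^k" using less_exp[of k] by simp
    have j1: "k \<le> 2^j" unfolding j_def by (rule LeastI[of _ k]) (rule ex)
    have "j \<noteq> 0" using j1 assms by (cases j) auto
    then obtain i where i: "j = Suc i" by (cases j) auto
    have "i < j" using i by simp
    hence "\<not> k \<le> 2^i" unfolding j_def by (rule not_less_Least)
    hence "2^j \<le> 2*k-1" using i by auto
    thus ?thesis using that j1 by blast
  qed
  have a: "odd (2*k-5)" "2*k-3 = (2*k-5)+2" "2*k-1 = (2*k-5)+4" using assms by auto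
  define a5 where "a5 = 2*k-5"
  have oa: "odd a5" using a a5_def by simp
  have c1: "coprime (a5+2) a5"
  proof -
    have "coprime 2 a5" using oa by simp
    hence "gcd (2+a5) a5 = 1" by (simp only: gcd_add1 coprime_iff_gcd_eq_1)
    thus ?thesis by (simp add: coprime_iff_gcd_eq_1 add.commute)
  qed
  have c2: "coprime (a5+4) a5"
  proof -
    have "coprime ((2::nat)^2) a5" using oa coprime_power_left_iff[of "2::nat" 2 a5] by simp
    hence "coprime (4::nat) a5" by simp
    hence "gcd (4+a5) a5 = 1" by (simp only: gcd_add1 coprime_iff_gcd_eq_1)
    thus ?thesis by (simp add: coprime_iff_gcd_eq_1 add.commute)
  qed
  have c3: "coprime (a5+4) (a5+2)"
  proof -
    have "odd (a5+2)" using oa by simp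
    hence "coprime 2 (a5+2)" by simp
    hence "gcd (2+(a5+2)) (a5+2) = 1" by (simp only: gcd_add1 coprime_iff_gcd_eq_1)
    moreover have "2+(a5+2) = a5+4" by simp
    ultimately show ?thesis by (simp only: coprime_iff_gcd_eq_1)
  qed
  have c4: "coprime ((2::nat)^j) x" if "odd x" for x using that by simp
  have dv1: "(a5+4) dvd L" "(a5+2) dvd L" "a5 dvd L" "2^j dvd L"
    using assms j by (auto intro!: d simp: a5_def)
  have p1: "(a5+4)*(a5+2) dvd L" using dv1(1,2) c3 by (rule divides_mult)
  have "coprime ((a5+4)*(a5+2)) a5" using c1 c2 by (simp only: coprime_mult_left_iff)
  with p1 dv1(3) have p2: "(a5+4)*(a5+2)*a5 dvd L" by (rule divides_mult)
  have "odd ((a5+4)*(a5+2)*a5)" using oa by simp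
  hence "coprime ((a5+4)*(a5+2)*a5) (2^j)" using c4 coprime_commute by blast
  with p2 dv1(4) have "(a5+4)*(a5+2)*a5*2^j dvd L" by (rule divides_mult)
  moreover have "L \<noteq> 0" unfolding L_def using Lcm_0_iff_nat[of "{2..2*k-1}"] by auto
  hence "L > 0" by simp
  ultimately have "(a5+4)*(a5+2)*a5*2^j \<le> L" by (simp add: dvd_imp_le)
  moreover have "(a5+4)*(a5+2)*a5*k \<le> (a5+4)*(a5+2)*a5*2^j" using j by simp
  ultimately have "(a5+4)*(a5+2)*a5*k \<le> L" by (rule order.trans[rotated])
  moreover have "(2*k-1)*(2*k-3)*(2*k-5)*k = (a5+4)*(a5+2)*a5*k" using a by (simp add: a5_def)
  ultimately show ?thesis unfolding L_def by (metis (no_types))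
qed

lemma of_int_sum_mset: "real_of_int (sum_mset M) = (\<Sum>x\<in>#M. real_of_int x)"
  by (induction M) auto

lemma gauss_real: "(\<Sum>b\<in>{1..k::nat}. real b) = real k * (real k + 1) / 2"
  by (induction k) (auto simp: field_simps)

lemma core:
  fixes S :: "int multiset" and m :: real and s :: int
  assumes s: "s = 1 \<or> s = -1" and bd: "bounded_seq k S" and zs: "sum_mset S = 0"
    and cm: "\<And>b::nat. 1 \<le> b \<Longrightarrow> b \<le> k \<Longrightarrow> real (count S (- s * int b)) \<le> m"
  shows "real (size S) \<le> real (count S 0) + m * (real k * (real k + 3) / 2)"
proof -
  define A where "A = {- int k..int k}"
  have fA: "finite A" unfolding A_def by simp
  have SA: "set_mset S \<subseteq> A" using bd unfolding bounded_seq_def A_def by auto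
  define h where "h x = (if real_of_int s * real_of_int x < 0 then 1 - real_of_int s * real_of_int x else 0)" for x
  define g where "g x = (if x = 0 then 1 else 0) + real_of_int s * real_of_int x + h x" for x
  have g1: "1 \<le> g x" for x
    using s unfolding g_def h_def by (cases "x = 0") (auto simp: not_less)
  have "real (size S) = (\<Sum>x\<in>#S. (1::real))" by simp
  also have "\<dots> \<le> (\<Sum>x\<in>#S. g x)" by (rule sum_mset_mono) (rule g1)
  also have "\<dots> = (\<Sum>a\<in>A. real (count S a) * g a)" by (rule sum_count[OF fA SA])
  also have "\<dots> = (\<Sum>a\<in>A. real (count S a) * (if a = 0 then 1 else 0))
        + real_of_int s * (\<Sum>a\<in>A. real (count S a) * real_of_int a)
        + (\<Sum>a\<in>A. real (count S a) * h a)"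
    unfolding g_def by (simp add: algebra_simps sum.distrib sum_distrib_left)
  also have "(\<Sum>a\<in>A. real (count S a) * (if a = 0 then 1 else 0)) = real (count S 0)"
  proof -
    have "0 \<in> A" unfolding A_def by simp
    thus ?thesis using fA by (simp add: if_distrib sum.delta cong: if_cong)
  qed
  also have "(\<Sum>a\<in>A. real (count S a) * real_of_int a) = 0"
  proof -
    have "(\<Sum>a\<in>A. real (count S a) * real_of_int a) = (\<Sum>x\<in>#S. real_of_int x)"
      by (rule sum_count[OF fA SA, symmetric])
    also have "\<dots> = real_of_int (sum_mset S)" by (simp add: of_int_sum_mset)
    finally show ?thesis using zs by simp
  qed
  also have "(\<Sum>a\<in>A. real (count S a) * h a) \<le> m * (real k * (real k + 3) / 2)"
  proof -
    define B where "B = (\<lambda>b::nat. - s * int b) ` {1..k}"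
    have BA: "B \<subseteq> A" unfolding B_def A_def using s by auto
    have "(\<Sum>a\<in>A. real (count S a) * h a) = (\<Sum>a\<in>B. real (count S a) * h a)"
    proof (rule sum.mono_neutral_right[OF fA BA], rule ballI)
      fix a assume a: "a \<in> A - B"
      have "h a = 0"
      proof (rule ccontr)
        assume "h a \<noteq> 0"
        hence neg: "s * a < 0" unfolding h_def
          by (metis (mono_tags) of_int_less_0_iff of_int_mult)
        define b where "b = nat (- s * a)"
        have "- s * int b = a" unfolding b_def using neg s by auto
        moreover have "1 \<le> b" "b \<le> k" using neg s a unfolding b_def A_def by auto
        ultimately have "a \<in> B" unfolding B_def by force
        thus False using a by simp
      qed
      thus "real (count S a) * h a = 0" by simp
    qed
    also have "\<dots> = (\<Sum>b\<in>{1..k}. real (count S (- s * int b)) * h (- s * int b))"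
      unfolding B_def
      by (rule sum.reindex_cong[where l="\<lambda>b::nat. - s * int b"]) (auto simp: inj_on_def s, use s in auto)
    also have "\<dots> \<le> (\<Sum>b\<in>{1..k}. m * (1 + real b))"
    proof (rule sum_mono)
      fix b assume b: "b \<in> {1..k}"
      have hb: "h (- s * int b) = 1 + real b" using s b unfolding h_def by auto
      show "real (count S (- s * int b)) * h (- s * int b) \<le> m * (1 + real b)"
        unfolding hb using cm[of b] b by (auto intro!: mult_right_mono)
    qed
    also have "\<dots> = m * (real k + (\<Sum>b\<in>{1..k}. real b))"
      by (simp add: sum.distrib sum_distrib_left algebra_simps)
    also have "\<dots> = m * (real k * (real k + 3) / 2)"
      unfolding gauss_real by (simp add: field_simps)
    finally show ?thesis .
  qed
  finally show ?thesis by simp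
qed

theorem lemma2p2:
  fixes k t n :: nat and S :: "int multiset"
  assumes "k \<ge> 4"
    and "t > 0"
    and "Lcm {2..2*k-1} dvd t"
    and "k^2 - k \<le> n" and "n + 10*k \<le> 4*k^2 + 5"
    and "zero_sum S" and "bounded_seq k S"
    and "size S = t + n"
    and "avoiding t S"
  shows "\<exists>\<alpha> \<beta> :: int. \<alpha> > 0 \<and> \<beta> > 0 \<and>
           real (count S \<alpha>) \<ge> real k / real (k + 1) * real n \<and>
           real (count S (- \<beta>)) \<ge> real k / real (k + 1) * real n"
proof -
  define m where "m = real k / real (k + 1) * real n"
  have Lt: "Lcm {2..2*k-1} \<le> t" using assms(3,2) by (simp add: dvd_imp_le)
  have P: "(2*k-1)*(2*k-3)*(2*k-5)*k \<le> t" using lcm_bound[OF assms(1)] Lt by linarith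
  have Q: "k*(k+3)*n \<le> 2*(k+1)*((2*k-1)*(2*k-3)*(2*k-5))" by (rule poly_ineq[OF assms(1,5)])
  have Q2: "k*(k*(k+3)*n) \<le> 2*(k+1)*((2*k-1)*(2*k-3)*(2*k-5)*k)"
    using mult_le_mono2[OF Q, of k] by (simp add: algebra_simps)
  also have "\<dots> \<le> 2*(k+1)*t" using P by (rule mult_le_mono2)
  finally have Q3: "real k * (real k * (real k + 3) * real n) \<le> 2 * (real k + 1) * real t"
    by (metis (mono_tags, lifting) of_nat_add of_nat_le_iff of_nat_mult of_nat_numeral of_nat_1)
  have key: "m * (real k * (real k + 3) / 2) \<le> real t"
  proof -
    have "m * (real k * (real k + 3) / 2) = real k * (real k * (real k + 3) * real n) / (2 * (real k + 1))"
      unfolding m_def by (simp add: field_simps)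
    also have "\<dots> \<le> real t" using Q3 by (simp add: divide_le_eq mult.commute)
    finally show ?thesis .
  qed
  have zs: "sum_mset S = 0" using assms(6) unfolding zero_sum_def .
  have zero: "\<not> n \<le> count S 0"
  proof
    assume c: "n \<le> count S 0"
    define T where "T = replicate_mset n (0::int)"
    have TS: "T \<subseteq># S" unfolding T_def using c
      by (simp add: subseteq_mset_def)
    have "S - T \<subseteq># S" by simp
    moreover have "size (S - T) = t" using TS assms(8) by (simp add: size_Diff_submset T_def)
    moreover have "zero_sum (S - T)" unfolding zero_sum_def using TS zs
      by (simp add: sum_mset_diff T_def)
    ultimately show False using assms(9) unfolding avoiding_def by blast
  qed
  have side: "\<exists>c::int. c > 0 \<and> real (count S (- s * c)) \<ge> m" if s: "s = 1 \<or> s = -1" for s :: int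
  proof (rule ccontr)
    assume H: "\<not> ?thesis"
    have cm: "real (count S (- s * int b)) \<le> m" if "1 \<le> b" "b \<le> k" for b :: nat
      using H that by (metis linorder_not_le less_imp_le of_nat_0_less_iff less_le_trans zero_less_one of_nat_less_iff)
    have "real (size S) \<le> real (count S 0) + m * (real k * (real k + 3) / 2)"
      by (rule core[OF s assms(7) zs cm])
    hence "real t + real n \<le> real (count S 0) + real t" using key assms(8) by simp
    hence "n \<le> count S 0" by simp
    thus False using zero by simp
  qed
  obtain a where a: "a > 0" "real (count S a) \<ge> m" using side[of "-1"] by auto
  obtain b where b: "b > 0" "real (count S (- b)) \<ge> m" using side[of 1] by auto
  show ?thesis using a b unfolding m_def by blast
qed
end
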